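(* Fix a reflection matrix $\mathbf\Phi$ and let $(\{\mathbf W_k^{\star\star}\}_{k\in\mathcal K},\mathbf R_0^{\star\star})$ be an optimal solution of problem (SDR2.1). Define, for each $k\in\mathcal K$, $$\mathbf w_k^{\mathrm{opt,II}}=(\mathbf h_k^H\mathbf W_k^{\star\star}\mathbf h_k)^{-1/2}\,\mathbf W_k^{\star\star}\mathbf h_k,\qquad \mathbf R_0^{\mathrm{opt,II}}=\mathbf R_0^{\star\star}+\sum_{k\in\mathcal K}\mathbf W_k^{\star\star}-\sum_{k\in\mathcal K}\mathbf w_k^{\mathrm{opt,II}}(\mathbf w_k^{\mathrm{opt,II}})^H .$$ Then these are well defined, $\mathbf R_0^{\mathrm{opt,II}}\succeq\mathbf 0$, and $(\{\mathbf w_k^{\mathrm{opt,II}}\},\mathbf R_0^{\mathrm{opt,II}})$ is an optimal solution of problem (P2.1). In particular (P2.1) and (SDR2.1) have the same optimal value.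
   Context: Let $M,N,K\ge1$ be integers and $\mathcal K=\{1,\dots,K\}$. Fixed data: $\mathbf G\in\mathbb C^{N\times M}$, $\mathbf h_{\mathrm d,k}\in\mathbb C^{M}$ and $\mathbf h_{\mathrm r,k}\in\mathbb C^{N}$ for $k\in\mathcal K$, thresholds $\Gamma_k>0$, noise powers $\sigma_k^2>0$, and a power budget $P_0>0$. A reflection matrix is $\mathbf\Phi=\mathrm{diag}(\mathbf v)$ with $\mathbf v\in\mathbb C^N$, $|v_n|=1$ for all $n$. For a given $\mathbf\Phi$ put $\mathbf h_k=\mathbf h_{\mathrm d,k}+\mathbf G^H\mathbf\Phi^H\mathbf h_{\mathrm r,k}$ and $\mathbf H_k=\mathbf h_k\mathbf h_k^H$. For $\mathbf w_1,\dots,\mathbf w_K\in\mathbb C^M$ the Type-II SINR of user $k$ is $$\gamma_k^{\mathrm{II}}=\frac{|\mathbf h_k^H\mathbf w_k|^2}{\sum_{i\ne k}|\mathbf h_k^H\mathbf w_i|^2+\sigma_k^2},$$ and the power constraint is $\sum_{k}\|\mathbf w_k\|^2+\mathrm{tr}(\mathbf R_0)\le P_0$. For Hermitian $\mathbf X\succeq\mathbf 0$ define $f(\mathbf X)=\mathrm{tr}\big((\mathbf G\mathbf X\mathbf G^H)^{-1}\big)$ if $\mathbf G\mathbf X\mathbf G^H$ is invertible and $f(\mathbf X)=+\infty$ otherwise. Problem (P2.1) (for fixed $\mathbf\Phi$): minimize $f\big(\sum_k\mathbf w_k\mathbf w_k^H+\mathbf R_0\big)$ over $\mathbf w_k\in\mathbb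 C^M$ and Hermitian $\mathbf R_0\succeq\mathbf 0$, subject to $\gamma_k^{\mathrm{II}}\ge\Gamma_k$ for all $k$ and the power constraint. Problem (SDR2.1) (for fixed $\mathbf\Phi$): minimize $f\big(\sum_k\mathbf W_k+\mathbf R_0\big)$ over Hermitian $\mathbf W_k\succeq\mathbf 0$ ($k\in\mathcal K$) and $\mathbf R_0\succeq\mathbf 0$, subject to $\tfrac1{\Gamma_k}\mathrm{tr}(\mathbf H_k\mathbf W_k)-\sum_{i\ne k}\mathrm{tr}(\mathbf H_k\mathbf W_i)\ge\sigma_k^2$ for all $k$, and $\sum_k\mathrm{tr}(\mathbf W_k)+\mathrm{tr}(\mathbf R_0)\le P_0$. *)

theory Defs
  imports "HOL-Analysis.Analysis"
begin

text \<open>Complex matrices are represented as complex^'c^'r (rows indexed by 'r,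
columns by 'c), complex vectors as complex^'n.\<close>

definition cadj :: "complex^'c^'r \<Rightarrow> complex^'r^'c" where
  "cadj A = (\<chi> i j. cnj (A $ j $ i))"

definition cvadj :: "complex^'n \<Rightarrow> complex^'n" where
  "cvadj x = (\<chi> i. cnj (x $ i))"

definition cinner :: "complex^'n \<Rightarrow> complex^'n \<Rightarrow> complex" where
  "cinner x y = (\<Sum>i\<in>UNIV. cnj (x $ i) * y $ i)"

definition cnorm2 :: "complex^'n \<Rightarrow> real" where
  "cnorm2 x = (\<Sum>i\<in>UNIV. (cmod (x $ i))^2)"

definition outer :: "complex^'n \<Rightarrow> complex^'n^'n" where
  "outer w = (\<chi> i j. w $ i * cnj (w $ j))"

definition hermitian :: "complex^'n^'n \<Rightarrow> bool" where
  "hermitian X \<longleftrightarrow> cadj X = X"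

definition psd :: "complex^'n^'n \<Rightarrow> bool" where
  "psd X \<longleftrightarrow> hermitian X \<and> (\<forall>x. 0 \<le> Re (cinner x (X *v x)))"

definition diagm :: "complex^'n \<Rightarrow> complex^'n^'n" where
  "diagm v = (\<chi> i j. if i = j then v $ i else 0)"

definition unimod :: "complex^'n \<Rightarrow> bool" where
  "unimod v \<longleftrightarrow> (\<forall>n. cmod (v $ n) = 1)"

definition heff :: "complex^'m^'n \<Rightarrow> complex^'n \<Rightarrow> complex^'m \<Rightarrow> complex^'n \<Rightarrow> complex^'m" where
  "heff G v hdk hrk = hdk + (cadj G ** cadj (diagm v)) *v hrk"

text \<open>Objective f(X) = tr((G X G^H)^{-1}) if invertible, +infinity otherwise.
For Hermitian PSD X and invertible G X G^H this trace is real; we take its real part.\<close>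
definition fobj :: "complex^'m^'n \<Rightarrow> complex^'m^'m \<Rightarrow> ereal" where
  "fobj G X = (if invertible (G ** X ** cadj G)
               then ereal (Re (trace (matrix_inv (G ** X ** cadj G)))) else \<infinity>)"

definition sinrII :: "('k::finite \<Rightarrow> complex^'m) \<Rightarrow> ('k \<Rightarrow> real) \<Rightarrow> ('k \<Rightarrow> complex^'m) \<Rightarrow> 'k \<Rightarrow> real" where
  "sinrII h \<sigma>2 w k = (cmod (cinner (h k) (w k)))^2 /
      ((\<Sum>i\<in>UNIV - {k}. (cmod (cinner (h k) (w i)))^2) + \<sigma>2 k)"

definition feasP21 ::
  "('k::finite \<Rightarrow> complex^'m) \<Rightarrow> ('k \<Rightarrow> real) \<Rightarrow> ('k \<Rightarrow> real) \<Rightarrow> real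
   \<Rightarrow> ('k \<Rightarrow> complex^'m) \<Rightarrow> complex^'m^'m \<Rightarrow> bool" where
  "feasP21 h \<Gamma> \<sigma>2 P0 w R0 \<longleftrightarrow>
     psd R0 \<and> (\<forall>k. sinrII h \<sigma>2 w k \<ge> \<Gamma> k) \<and>
     (\<Sum>k\<in>UNIV. cnorm2 (w k)) + Re (trace R0) \<le> P0"

definition objP21 :: "complex^'m^'n \<Rightarrow> ('k::finite \<Rightarrow> complex^'m) \<Rightarrow> complex^'m^'m \<Rightarrow> ereal" where
  "objP21 G w R0 = fobj G ((\<Sum>k\<in>UNIV. outer (w k)) + R0)"

text \<open>Feasible set of (SDR2.1).  The traces below are real for PSD arguments;
the constraints are imposed on their real parts.\<close>
definition feasSDR ::
  "('k::finite \<Rightarrow> complex^'m) \<Rightarrow> ('k \<Rightarrow> real) \<Rightarrow> ('k \<Rightarrow> real) \<Rightarrow> real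
   \<Rightarrow> ('k \<Rightarrow> complex^'m^'m) \<Rightarrow> complex^'m^'m \<Rightarrow> bool" where
  "feasSDR h \<Gamma> \<sigma>2 P0 W R0 \<longleftrightarrow>
     (\<forall>k. psd (W k)) \<and> psd R0 \<and>
     (\<forall>k. (1 / \<Gamma> k) * Re (trace (outer (h k) ** W k))
          - (\<Sum>i\<in>UNIV - {k}. Re (trace (outer (h k) ** W i))) \<ge> \<sigma>2 k) \<and>
     (\<Sum>k\<in>UNIV. Re (trace (W k))) + Re (trace R0) \<le> P0"

definition objSDR :: "complex^'m^'n \<Rightarrow> ('k::finite \<Rightarrow> complex^'m^'m) \<Rightarrow> complex^'m^'m \<Rightarrow> ereal" where
  "objSDR G W R0 = fobj G ((\<Sum>k\<in>UNIV. W k) + R0)"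

definition optP21 where
  "optP21 G h \<Gamma> \<sigma>2 P0 w R0 \<longleftrightarrow> feasP21 h \<Gamma> \<sigma>2 P0 w R0 \<and>
     (\<forall>w' R0'. feasP21 h \<Gamma> \<sigma>2 P0 w' R0' \<longrightarrow> objP21 G w R0 \<le> objP21 G w' R0')"

definition optSDR where
  "optSDR G h \<Gamma> \<sigma>2 P0 W R0 \<longleftrightarrow> feasSDR h \<Gamma> \<sigma>2 P0 W R0 \<and>
     (\<forall>W' R0'. feasSDR h \<Gamma> \<sigma>2 P0 W' R0' \<longrightarrow> objSDR G W R0 \<le> objSDR G W' R0')"

definition valP21 where
  "valP21 G h \<Gamma> \<sigma>2 P0 = (INF p\<in>{(w, R0). feasP21 h \<Gamma> \<sigma>2 P0 w R0}. objP21 G (fst p) (snd p))"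

definition valSDR where
  "valSDR G h \<Gamma> \<sigma>2 P0 = (INF p\<in>{(W, R0). feasSDR h \<Gamma> \<sigma>2 P0 W R0}. objSDR G (fst p) (snd p))"

end

theory Submission
  imports Defs
begin


lemma cinner_add_right: "cinner x (y + z) = cinner x y + cinner x z"
  by (simp add: cinner_def sum.distrib algebra_simps)
lemma cinner_add_left: "cinner (x + y) z = cinner x z + cinner y z"
  by (simp add: cinner_def sum.distrib algebra_simps)
lemma cinner_diff_right: "cinner x (y - z) = cinner x y - cinner x z"
  by (simp add: cinner_def sum_subtractf algebra_simps)
lemma cinner_scale_right: "cinner x (c *s y) = c * cinner x y"
  by (simp add: cinner_def sum_distrib_left algebra_simps)
lemma cinner_scale_left: "cinner (c *s x) y = cnj c * cinner x y"
  by (simp add: cinner_def sum_distrib_left algebra_simps)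
lemma cinner_commute: "cinner y x = cnj (cinner x y)"
  by (simp add: cinner_def mult.commute)
lemma mult_cnj: "z * cnj z = (of_real (cmod z))^2"
  by (metis complex_norm_square of_real_power)
lemma cinner_self: "cinner w w = of_real (cnorm2 w)"
  by (simp add: cinner_def cnorm2_def mult_cnj mult.commute)

lemma matvec_add: "(A + B) *v x = A *v x + B *v x"
  by (simp add: matrix_vector_mult_add_rdistrib)
lemma matvec_diff: "((A::complex^'n^'m) - B) *v x = A *v x - B *v x"
  by (simp add: matrix_vector_mult_def vec_eq_iff sum_subtractf algebra_simps)
lemma matvec_add_right: "A *v (x + y) = A *v x + A *v y"
  by (simp add: matrix_vector_right_distrib)
lemma matvec_scale: "(A::complex^'n^'m) *v (c *s x) = c *s (A *v x)"
  by (simp add: matrix_vector_mult_def vec_eq_iff sum_distrib_left algebra_simps)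
lemma outer_mv: "outer w *v y = cinner w y *s w"
  by (simp add: outer_def matrix_vector_mult_def cinner_def vec_eq_iff sum_distrib_left algebra_simps)

lemma trace_outer_mult: "trace (outer h ** W) = cinner h (W *v h)"
proof -
  have "trace (outer h ** W) = (\<Sum>i\<in>UNIV. \<Sum>j\<in>UNIV. cnj (h$j) * W$j$i * h$i)"
    by (simp add: trace_def matrix_matrix_mult_def outer_def mult.commute mult.left_commute)
  also have "\<dots> = (\<Sum>j\<in>UNIV. \<Sum>i\<in>UNIV. cnj (h$j) * W$j$i * h$i)" by (rule sum.swap)
  also have "\<dots> = cinner h (W *v h)"
    by (simp add: cinner_def matrix_vector_mult_def sum_distrib_left mult.assoc)
  finally show ?thesis .
qed

lemma trace_outer: "trace (outer w) = of_real (cnorm2 w)"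
  by (simp add: trace_def outer_def cnorm2_def mult_cnj)

lemma hermitian_cinner: assumes "hermitian A" shows "cinner y (A *v x) = cnj (cinner x (A *v y))"
proof -
  have e2: "\<And>i j. cnj (A $ j $ i) = A $ i $ j"
    using assms unfolding hermitian_def cadj_def by (metis vec_lambda_beta)
  have "cinner y (A *v x) = (\<Sum>i\<in>UNIV. \<Sum>j\<in>UNIV. cnj (y$i) * A$i$j * x$j)"
    by (simp add: cinner_def matrix_vector_mult_def sum_distrib_left mult.assoc)
  also have "\<dots> = (\<Sum>j\<in>UNIV. \<Sum>i\<in>UNIV. cnj (y$i) * A$i$j * x$j)" by (rule sum.swap)
  also have "\<dots> = (\<Sum>j\<in>UNIV. x$j * (\<Sum>i\<in>UNIV. cnj (A$j$i) * cnj (y$i)))"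
    by (simp add: e2 sum_distrib_left mult.commute mult.left_commute)
  also have "\<dots> = cnj (cinner x (A *v y))"
    by (simp add: cinner_def matrix_vector_mult_def)
  finally show ?thesis .
qed

lemma cadj_add: "cadj (A + B) = cadj A + cadj B" by (simp add: cadj_def vec_eq_iff)
lemma cadj_diff: "cadj (A - B) = cadj A - cadj B" by (simp add: cadj_def vec_eq_iff)
lemma cadj_outer: "cadj (outer w) = outer w" by (simp add: cadj_def outer_def vec_eq_iff)

lemma cinner_outer: "cinner x (outer w *v x) = of_real ((cmod (cinner x w))^2)"
  by (simp add: outer_mv cinner_scale_right mult_cnj cinner_commute[of w x] mult.commute)

lemma psd_outer: "psd (outer w)"
  unfolding psd_def hermitian_def by (simp add: cadj_outer cinner_outer)

lemma psd_add: "psd A \<Longrightarrow> psd B \<Longrightarrow> psd (A + B)"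
  unfolding psd_def hermitian_def by (simp add: cadj_add matvec_add cinner_add_right)

lemma psd_zero: "psd 0"
  unfolding psd_def hermitian_def by (simp add: cadj_def vec_eq_iff cinner_def)

lemma psd_sum: "finite S \<Longrightarrow> (\<And>k. k \<in> S \<Longrightarrow> psd (f k)) \<Longrightarrow> psd (sum f S)"
  by (induction S rule: finite_induct) (auto simp: psd_zero psd_add)

lemma trace_sum: "finite S \<Longrightarrow> trace (sum f S :: complex^'n^'n) = (\<Sum>k\<in>S. trace (f k))"
  by (induction S rule: finite_induct) (auto simp: trace_add trace_def sum.distrib)

lemma psd_real: assumes "psd A" shows "Im (cinner x (A *v x)) = 0"
proof -
  have "cinner x (A *v x) = cnj (cinner x (A *v x))"
    using assms hermitian_cinner[of A x x] unfolding psd_def by blast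
  then have "Im (cinner x (A *v x)) = - Im (cinner x (A *v x))" by (metis cnj.simps(2))
  then show ?thesis by simp
qed

lemma CS:
  assumes "psd W" and c: "c = Re (cinner y (W *v y))" and cpos: "c > 0"
  shows "(cmod (cinner x (W *v y)))^2 \<le> Re (cinner x (W *v x)) * c"
proof -
  have H: "hermitian W" using assms(1) unfolding psd_def by blast
  define b where "b = cinner x (W *v y)"
  define a where "a = Re (cinner x (W *v x))"
  define z where "z = - cnj b / of_real c"
  have yy: "cinner y (W *v y) = of_real c" using psd_real[OF assms(1), of y] c by (simp add: complex_eq_iff)
  have xx: "cinner x (W *v x) = of_real a" using psd_real[OF assms(1), of x] a_def by (simp add: complex_eq_iff)
  have yx: "cinner y (W *v x) = cnj b" unfolding b_def by (rule hermitian_cinner[OF H])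
  have "0 \<le> Re (cinner (x + z *s y) (W *v (x + z *s y)))" using assms(1) unfolding psd_def by blast
  also have "cinner (x + z *s y) (W *v (x + z *s y)) = of_real a + z * b + cnj z * cnj b + cnj z * z * of_real c"
  proof -
    have e: "W *v (x + z *s y) = W *v x + z *s (W *v y)" by (simp add: matvec_add_right matvec_scale)
    have "cinner (x + z *s y) (W *v (x + z *s y)) = cinner x (W *v x) + z * cinner x (W *v y) + (cnj z * cinner y (W *v x) + cnj z * (z * cinner y (W *v y)))"
      unfolding e cinner_add_left cinner_add_right cinner_scale_left cinner_scale_right by (simp add: algebra_simps)
    then show ?thesis by (simp add: xx yy yx b_def[symmetric] mult.assoc)
  qed
  also have "\<dots> = of_real a - of_real ((cmod b)^2 / c)"
  proof -
    have bb: "b * cnj b = of_real ((cmod b)^2)" by (simp add: mult_cnj)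
    have cz: "cnj z = - b / of_real c" unfolding z_def by simp
    have "z * b = - of_real ((cmod b)^2 / c)" unfolding z_def using bb by (simp add: mult.commute)
    moreover have "cnj z * cnj b = - of_real ((cmod b)^2 / c)" unfolding cz using bb by simp
    moreover have "cnj z * z * of_real c = of_real ((cmod b)^2 / c)" unfolding cz z_def using bb cpos
      by (simp add: power2_eq_square)
    ultimately show ?thesis by simp
  qed
  finally have "0 \<le> Re (of_real a - of_real ((cmod b)^2 / c))" .
  then have "0 \<le> a - (cmod b)^2 / c" by (simp only: minus_complex.sel Re_complex_of_real)
  then have "(cmod b)^2 / c \<le> a" by linarith
  then show ?thesis using cpos unfolding a_def b_def by (simp add: pos_divide_le_eq)
qed

lemma psd_minus_outer:
  assumes "psd W" and c: "c = Re (cinner h (W *v h))" and cpos: "c > 0"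
  shows "psd (W - outer (complex_of_real (1 / sqrt c) *s (W *v h)))"
proof -
  have H: "hermitian W" using assms(1) unfolding psd_def by blast
  have "hermitian (W - outer (complex_of_real (1 / sqrt c) *s (W *v h)))"
    using H unfolding hermitian_def by (simp add: cadj_diff cadj_outer)
  moreover have "0 \<le> Re (cinner x ((W - outer (complex_of_real (1 / sqrt c) *s (W *v h))) *v x))" for x
  proof -
    have "(cmod (cinner x (W *v h)))^2 \<le> Re (cinner x (W *v x)) * c" by (rule CS[OF assms])
    moreover have "(cmod (cinner x (complex_of_real (1 / sqrt c) *s (W *v h))))^2 = (cmod (cinner x (W *v h)))^2 / c"
      using cpos by (simp add: cinner_scale_right norm_divide power_divide)
    ultimately show ?thesis using cpos
      by (simp add: matvec_diff cinner_diff_right cinner_outer pos_divide_le_eq)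
  qed
  ultimately show ?thesis unfolding psd_def by auto
qed




lemma grp_id: "(x::'a::ab_group_add) + (a + b - x) = b + a"
  by (simp add: algebra_simps)

lemma sdr_from_p21:
  assumes Gpos: "\<forall>k. \<Gamma> k > 0" and spos: "\<forall>k. \<sigma>2 k > 0"
    and f: "feasP21 h \<Gamma> \<sigma>2 P0 w R0"
  shows "feasSDR h \<Gamma> \<sigma>2 P0 (\<lambda>k. outer (w k)) R0"
proof -
  have T: "\<And>k i. Re (trace (outer (h k) ** outer (w i))) = (cmod (cinner (h k) (w i)))^2"
    by (simp add: trace_outer_mult cinner_outer)
  have c: "(1 / \<Gamma> k) * Re (trace (outer (h k) ** outer (w k)))
          - (\<Sum>i\<in>UNIV - {k}. Re (trace (outer (h k) ** outer (w i)))) \<ge> \<sigma>2 k" for k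
  proof -
    define D where "D = (\<Sum>i\<in>UNIV - {k}. (cmod (cinner (h k) (w i)))^2) + \<sigma>2 k"
    have Dpos: "D > 0" unfolding D_def using spos by (simp add: add_nonneg_pos sum_nonneg)
    have "\<Gamma> k \<le> (cmod (cinner (h k) (w k)))^2 / D" using f unfolding feasP21_def sinrII_def D_def by auto
    then have "\<Gamma> k * D \<le> (cmod (cinner (h k) (w k)))^2" using Dpos by (simp add: pos_le_divide_eq)
    then have "D \<le> (cmod (cinner (h k) (w k)))^2 / \<Gamma> k" using Gpos by (simp add: pos_le_divide_eq mult.commute)
    then show ?thesis unfolding T D_def by simp
  qed
  have p: "(\<Sum>k\<in>UNIV. Re (trace (outer (w k)))) + Re (trace R0) \<le> P0"
    using f unfolding feasP21_def by (simp add: trace_outer)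
  show ?thesis unfolding feasSDR_def using c p f psd_outer unfolding feasP21_def by auto
qed

lemma main:
  fixes h :: "'k::finite \<Rightarrow> complex^'m" and G :: "complex^'m^'n"
  assumes Gpos: "\<forall>k. \<Gamma> k > 0" and spos: "\<forall>k. \<sigma>2 k > 0"
    and opt: "optSDR G h \<Gamma> \<sigma>2 P0 W R0"
    and qd: "q = (\<lambda>k. cinner (h k) (W k *v h k))"
    and wd: "w = (\<lambda>k. complex_of_real (1 / sqrt (Re (q k))) *s (W k *v h k))"
    and Rd: "R = R0 + (\<Sum>k\<in>UNIV. W k) - (\<Sum>k\<in>UNIV. outer (w k))"
  shows "(\<forall>k. Im (q k) = 0 \<and> Re (q k) > 0) \<and> psd R \<and>
            optP21 G h \<Gamma> \<sigma>2 P0 w R \<and>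
            valP21 G h \<Gamma> \<sigma>2 P0 = valSDR G h \<Gamma> \<sigma>2 P0"
proof -
  from opt have feas: "feasSDR h \<Gamma> \<sigma>2 P0 W R0"
    and minim: "\<And>W' R0'. feasSDR h \<Gamma> \<sigma>2 P0 W' R0' \<Longrightarrow> objSDR G W R0 \<le> objSDR G W' R0'"
    unfolding optSDR_def by auto
  from feas have Wpsd: "\<And>k. psd (W k)" and R0psd: "psd R0"
    and sinr: "\<And>k. (1 / \<Gamma> k) * Re (trace (outer (h k) ** W k))
          - (\<Sum>i\<in>UNIV - {k}. Re (trace (outer (h k) ** W i))) \<ge> \<sigma>2 k"
    and pow: "(\<Sum>k\<in>UNIV. Re (trace (W k))) + Re (trace R0) \<le> P0"
    unfolding feasSDR_def by auto
  have Tnn: "\<And>k i. Re (cinner (h k) (W i *v h k)) \<ge> 0" using Wpsd psd_def by blast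
  have qreal: "\<And>k. Im (q k) = 0" unfolding qd using psd_real[OF Wpsd] by simp
  have qpos: "Re (q k) > 0" for k
  proof -
    have "0 \<le> (\<Sum>i\<in>UNIV - {k}. Re (trace (outer (h k) ** W i)))"
      by (rule sum_nonneg) (simp add: trace_outer_mult Tnn)
    then have "(1 / \<Gamma> k) * Re (q k) > 0" using sinr[of k] spos unfolding qd
      by (simp add: trace_outer_mult) (smt (verit))
    then show ?thesis using Gpos[rule_format, of k] by (simp add: zero_less_divide_iff)
  qed
  have Wmo: "psd (W k - outer (w k))" for k
    unfolding wd using psd_minus_outer[OF Wpsd refl, of "h k"] qpos[of k] unfolding qd by simp
  have Rsum: "R = R0 + (\<Sum>k\<in>UNIV. W k - outer (w k))" unfolding Rd by (simp add: sum_subtractf)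
  have Rpsd: "psd R" unfolding Rsum by (intro psd_add R0psd psd_sum) (auto simp: Wmo)
  have sig: "(cmod (cinner (h k) (w k)))^2 = Re (q k)" for k
  proof -
    define r where "r = Re (q k)"
    have rpos: "r > 0" using qpos[of k] r_def by simp
    have qk: "q k = of_real r" using qreal[of k] r_def by (simp add: complex_eq_iff)
    have "cinner (h k) (w k) = complex_of_real (1 / sqrt r) * q k"
      unfolding wd r_def by (simp add: cinner_scale_right qd)
    also have "\<dots> = of_real (1 / sqrt r * r)" by (simp only: qk of_real_mult)
    also have "1 / sqrt r * r = sqrt r"
      using rpos by (simp add: real_div_sqrt)
    finally have "cinner (h k) (w k) = of_real (sqrt (Re (q k)))" unfolding r_def .
    then show ?thesis using qpos[of k] by simp
  qed
  have intf: "(cmod (cinner (h k) (w i)))^2 \<le> Re (cinner (h k) (W i *v h k))" for k i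
  proof -
    have "0 \<le> Re (cinner (h k) ((W i - outer (w i)) *v h k))" using Wmo[of i] psd_def by blast
    then show ?thesis by (simp add: matvec_diff cinner_diff_right cinner_outer)
  qed
  have sinrw: "sinrII h \<sigma>2 w k \<ge> \<Gamma> k" for k
  proof -
    define D where "D = (\<Sum>i\<in>UNIV - {k}. (cmod (cinner (h k) (w i)))^2) + \<sigma>2 k"
    have Dpos: "D > 0" unfolding D_def using spos by (simp add: add_nonneg_pos sum_nonneg)
    have "D \<le> (\<Sum>i\<in>UNIV - {k}. Re (trace (outer (h k) ** W i))) + \<sigma>2 k"
      unfolding D_def by (simp add: trace_outer_mult intf sum_mono)
    also have "\<dots> \<le> (1 / \<Gamma> k) * Re (q k)" using sinr[of k] unfolding qd by (simp add: trace_outer_mult)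
    finally have "\<Gamma> k * D \<le> Re (q k)" using Gpos by (simp add: field_simps)
    then show ?thesis unfolding sinrII_def D_def[symmetric] sig using Dpos by (simp add: pos_le_divide_eq)
  qed
  have trR: "Re (trace R) = Re (trace R0) + (\<Sum>k\<in>UNIV. Re (trace (W k))) - (\<Sum>k\<in>UNIV. cnorm2 (w k))"
    unfolding Rd by (simp add: trace_add trace_sub trace_sum trace_outer)
  have feasw: "feasP21 h \<Gamma> \<sigma>2 P0 w R"
    unfolding feasP21_def using Rpsd sinrw pow trR by auto
  have objeq: "objP21 G w R = objSDR G W R0"
  proof -
    have "(\<Sum>k\<in>UNIV. outer (w k)) + R = (\<Sum>k\<in>UNIV. W k) + R0" unfolding Rd by (rule grp_id)
    then show ?thesis unfolding objP21_def objSDR_def by simp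
  qed
  have optw: "optP21 G h \<Gamma> \<sigma>2 P0 w R"
    unfolding optP21_def
  proof (intro conjI allI impI feasw)
    fix w' R0' assume f': "feasP21 h \<Gamma> \<sigma>2 P0 w' R0'"
    have "objSDR G W R0 \<le> objSDR G (\<lambda>k. outer (w' k)) R0'"
      by (rule minim[OF sdr_from_p21[OF Gpos spos f']])
    also have "\<dots> = objP21 G w' R0'" unfolding objSDR_def objP21_def by simp
    finally show "objP21 G w R \<le> objP21 G w' R0'" using objeq by simp
  qed
  have v1: "valSDR G h \<Gamma> \<sigma>2 P0 = objSDR G W R0"
    unfolding valSDR_def
  proof (rule antisym)
    show "(INF p\<in>{(W, R0). feasSDR h \<Gamma> \<sigma>2 P0 W R0}. objSDR G (fst p) (snd p)) \<le> objSDR G W R0"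
      by (rule INF_lower2[of "(W, R0)"]) (use feas in auto)
    show "objSDR G W R0 \<le> (INF p\<in>{(W, R0). feasSDR h \<Gamma> \<sigma>2 P0 W R0}. objSDR G (fst p) (snd p))"
      by (rule INF_greatest) (auto intro: minim)
  qed
  have v2: "valP21 G h \<Gamma> \<sigma>2 P0 = objP21 G w R"
    unfolding valP21_def
  proof (rule antisym)
    show "(INF p\<in>{(w, R0). feasP21 h \<Gamma> \<sigma>2 P0 w R0}. objP21 G (fst p) (snd p)) \<le> objP21 G w R"
      by (rule INF_lower2[of "(w, R)"]) (use feasw in auto)
    show "objP21 G w R \<le> (INF p\<in>{(w, R0). feasP21 h \<Gamma> \<sigma>2 P0 w R0}. objP21 G (fst p) (snd p))"
      using optw unfolding optP21_def by (auto intro!: INF_greatest)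
  qed
  show ?thesis using qreal qpos Rpsd optw v1 v2 objeq by simp
qed

theorem proposition3:
  fixes G :: "complex^'m^'n"
    and hdir :: "'k::finite \<Rightarrow> complex^'m"
    and hris :: "'k \<Rightarrow> complex^'n"
    and \<Gamma> \<sigma>2 :: "'k \<Rightarrow> real"
    and P0 :: real
    and v :: "complex^'n"
    and W :: "'k \<Rightarrow> complex^'m^'m"
    and R0 :: "complex^'m^'m"
  assumes "\<forall>k. \<Gamma> k > 0" and "\<forall>k. \<sigma>2 k > 0" and "P0 > 0"
    and "unimod v"
    and opt: "optSDR G (\<lambda>k. heff G v (hdir k) (hris k)) \<Gamma> \<sigma>2 P0 W R0"
  shows "let h = (\<lambda>k. heff G v (hdir k) (hris k));
             q = (\<lambda>k. cinner (h k) (W k *v h k));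
             w = (\<lambda>k. complex_of_real (1 / sqrt (Re (q k))) *s (W k *v h k));
             R = R0 + (\<Sum>k\<in>UNIV. W k) - (\<Sum>k\<in>UNIV. outer (w k))
         in (\<forall>k. Im (q k) = 0 \<and> Re (q k) > 0) \<and> psd R \<and>
            optP21 G h \<Gamma> \<sigma>2 P0 w R \<and>
            valP21 G h \<Gamma> \<sigma>2 P0 = valSDR G h \<Gamma> \<sigma>2 P0"
  unfolding Let_def by (rule main[OF assms(1,2) opt refl refl refl])

end
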